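(* Let $Y$ be a set and let $d$ be a derivation of $R\mathfrak L[Y]$ (strictly raising the degree). Then for every $y\in Y$, \[d(y)\in\langle y\rangle+\bigcap_{y'\in Y,\ y'\neq y}\langle y'\rangle=:J_y,\] where $\langle z\rangle$ denotes the Lie ideal of $R\mathfrak L[Y]$ generated by $z$. Conversely, any map $Y\to R\mathfrak L[Y]_{\geq2}$ sending each $y$ into $J_y$ extends uniquely to a derivation of $R\mathfrak L[Y]$.
   Context: $R\mathfrak L[Y]$ is the Lie ring generated by $Y$ subject to $[y_1,[y_2,[\cdots[y_{s-1},y_s]\cdots]]]=0$ for every $s\geq2$ and every $(y_1,\dots,y_s)\in Y^s$ with $y_i=y_j$ for some $i\neq j$; it is graded by bracket length and $R\mathfrak L[Y]_{\geq2}$ is the part of degree at least $2$. Standing convention: derivations of $R\mathfrak L[Y]$ considered are those strictly raising the degree, i.e. sending $Y$ into $R\mathfrak L[Y]_{\geq2}$. *)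

theory Defs
  imports Main
begin

datatype 'y lexpr = Gen 'y | Zero | Add "'y lexpr" "'y lexpr" | Neg "'y lexpr"
  | Br "'y lexpr" "'y lexpr"

fun rnorm :: "'y list \<Rightarrow> 'y lexpr" where
  "rnorm [] = Zero"
| "rnorm [y] = Gen y"
| "rnorm (y # ys) = Br (Gen y) (rnorm ys)"

inductive rl_eq :: "'y lexpr \<Rightarrow> 'y lexpr \<Rightarrow> bool" where
  refl: "rl_eq a a"
| sym: "rl_eq a b \<Longrightarrow> rl_eq b a"
| trans: "rl_eq a b \<Longrightarrow> rl_eq b c \<Longrightarrow> rl_eq a c"
| cong_add: "rl_eq a b \<Longrightarrow> rl_eq c d \<Longrightarrow> rl_eq (Add a c) (Add b d)"
| cong_neg: "rl_eq a b \<Longrightarrow> rl_eq (Neg a) (Neg b)"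
| cong_br: "rl_eq a b \<Longrightarrow> rl_eq c d \<Longrightarrow> rl_eq (Br a c) (Br b d)"
| add_assoc: "rl_eq (Add (Add a b) c) (Add a (Add b c))"
| add_comm: "rl_eq (Add a b) (Add b a)"
| add_zero: "rl_eq (Add a Zero) a"
| add_neg: "rl_eq (Add a (Neg a)) Zero"
| br_add_left: "rl_eq (Br (Add a b) c) (Add (Br a c) (Br b c))"
| br_add_right: "rl_eq (Br a (Add b c)) (Add (Br a b) (Br a c))"
| br_alt: "rl_eq (Br a a) Zero"
| jacobi: "rl_eq (Add (Br a (Br b c)) (Add (Br b (Br c a)) (Br c (Br a b)))) Zero"
| rel: "2 \<le> length ys \<Longrightarrow> \<not> distinct ys \<Longrightarrow> rl_eq (rnorm ys) Zero"

lemma rl_eq_equivp: "equivp rl_eq"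
  by (rule equivpI; auto intro: reflpI sympI transpI rl_eq.intros)

quotient_type 'y RL = "'y lexpr" / rl_eq
  by (rule rl_eq_equivp)

instantiation RL :: (type) "{zero, plus, uminus, minus}"
begin
lift_definition zero_RL :: "'a RL" is Zero .
lift_definition plus_RL :: "'a RL \<Rightarrow> 'a RL \<Rightarrow> 'a RL" is Add
  by (rule rl_eq.cong_add)
lift_definition uminus_RL :: "'a RL \<Rightarrow> 'a RL" is Neg
  by (rule rl_eq.cong_neg)
lift_definition minus_RL :: "'a RL \<Rightarrow> 'a RL \<Rightarrow> 'a RL" is "\<lambda>a b. Add a (Neg b)"
  by (intro rl_eq.cong_add rl_eq.cong_neg)
instance ..
end

lift_definition rl_br :: "'y RL \<Rightarrow> 'y RL \<Rightarrow> 'y RL" is Br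
  by (rule rl_eq.cong_br)

lift_definition rl_gen :: "'y \<Rightarrow> 'y RL" is Gen .

inductive hom_deg :: "'y lexpr \<Rightarrow> nat \<Rightarrow> bool" where
  "hom_deg (Gen y) 1"
| "hom_deg Zero n"
| "hom_deg a n \<Longrightarrow> hom_deg b n \<Longrightarrow> hom_deg (Add a b) n"
| "hom_deg a n \<Longrightarrow> hom_deg (Neg a) n"
| "hom_deg a m \<Longrightarrow> hom_deg b n \<Longrightarrow> hom_deg (Br a b) (m + n)"

definition rl_deg :: "nat \<Rightarrow> 'y RL set" where
  "rl_deg n = abs_RL ` {e. hom_deg e n}"

inductive_set rl_geq2 :: "'y RL set" where
  "n \<ge> 2 \<Longrightarrow> x \<in> rl_deg n \<Longrightarrow> x \<in> rl_geq2"
| "x \<in> rl_geq2 \<Longrightarrow> z \<in> rl_geq2 \<Longrightarrow> x + z \<in> rl_geq2"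

inductive_set rl_ideal :: "'y RL \<Rightarrow> 'y RL set" for z where
  gen: "z \<in> rl_ideal z"
| zero: "0 \<in> rl_ideal z"
| add: "a \<in> rl_ideal z \<Longrightarrow> b \<in> rl_ideal z \<Longrightarrow> a + b \<in> rl_ideal z"
| neg: "a \<in> rl_ideal z \<Longrightarrow> - a \<in> rl_ideal z"
| br_l: "a \<in> rl_ideal z \<Longrightarrow> rl_br x a \<in> rl_ideal z"
| br_r: "a \<in> rl_ideal z \<Longrightarrow> rl_br a x \<in> rl_ideal z"

definition J :: "'y \<Rightarrow> 'y RL set" where
  "J y = {a + b | a b. a \<in> rl_ideal (rl_gen y) \<and>
                      b \<in> (\<Inter>y'\<in>{y'. y' \<noteq> y}. rl_ideal (rl_gen y'))}"

text \<open>Derivations of RL[Y] (additive, Leibniz), strictly raising the degree,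
  i.e. sending Y into RL[Y]_{>=2} (standing convention).\<close>
definition rl_derivation :: "('y RL \<Rightarrow> 'y RL) \<Rightarrow> bool" where
  "rl_derivation d \<longleftrightarrow>
     (\<forall>a b. d (a + b) = d a + d b) \<and>
     (\<forall>a b. d (rl_br a b) = rl_br (d a) b + rl_br a (d b)) \<and>
     (\<forall>y. d (rl_gen y) \<in> rl_geq2)"

end

theory Submission
  imports Defs
begin


instance RL :: (type) ab_group_add
proof
  fix a b c :: "'a RL"
  show "a + b + c = a + (b + c)" by transfer (rule rl_eq.add_assoc)
  show "a + b = b + a" by transfer (rule rl_eq.add_comm)
  show "0 + a = a" by transfer (meson rl_eq.add_comm rl_eq.add_zero rl_eq.trans)
  show "- a + a = 0" by transfer (meson rl_eq.add_comm rl_eq.add_neg rl_eq.trans)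
  show "a - b = a + - b" by transfer (rule rl_eq.refl)
qed

abbreviation g :: "'y \<Rightarrow> 'y RL" where "g \<equiv> rl_gen"
abbreviation br :: "'y RL \<Rightarrow> 'y RL \<Rightarrow> 'y RL" where "br \<equiv> rl_br"

lemma br_add_l: "br (a + b) c = br a c + br b c"
  by transfer (rule rl_eq.br_add_left)
lemma br_add_r: "br a (b + c) = br a b + br a c"
  by transfer (rule rl_eq.br_add_right)
lemma br_alt: "br a a = 0"
  by transfer (rule rl_eq.br_alt)
lemma br_jac: "br a (br b c) + (br b (br c a) + br c (br a b)) = 0"
  by transfer (rule rl_eq.jacobi)

lemma br_0_l[simp]: "br 0 c = 0"
  by (metis add_cancel_right_right add_0 br_add_l)
lemma br_0_r[simp]: "br c 0 = 0"
  by (metis add_cancel_right_right add_0 br_add_r)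
lemma br_neg_l[simp]: "br (- a) c = - br a c"
  by (metis add_eq_0_iff br_0_l br_add_l add.right_inverse)
lemma br_neg_r[simp]: "br c (- a) = - br c a"
  by (metis add_eq_0_iff br_0_r br_add_r add.right_inverse)
lemma br_diff_l: "br (a - b) c = br a c - br b c"
  by (simp only: diff_conv_add_uminus br_add_l br_neg_l)
lemma br_diff_r: "br c (a - b) = br c a - br c b"
  by (simp only: diff_conv_add_uminus br_add_r br_neg_r)
lemma br_anti: "br a b = - br b a"
proof -
  have "0 = br (a + b) (a + b)" by (rule br_alt[symmetric])
  also have "\<dots> = br a b + br b a" unfolding br_add_l br_add_r by (simp add: br_alt)
  finally have "br a b + br b a = 0" by simp
  then show ?thesis by (simp add: eq_neg_iff_add_eq_0)
qed
lemma br_left_jac: "br (br p q) c = br p (br q c) - br q (br p c)"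
proof -
  have j: "br p (br q c) + (br q (br c p) + br c (br p q)) = 0" by (rule br_jac)
  have 1: "br (br p q) c = - br c (br p q)" by (rule br_anti)
  have 2: "br q (br c p) = - br q (br p c)" by (simp add: br_anti[of c p])
  have j2: "br c (br p q) + (br p (br q c) + br q (br c p)) = 0"
    using j by (simp add: add.commute add.left_commute)
  have "br c (br p q) = - (br p (br q c) + br q (br c p))"
    using j2 eq_neg_iff_add_eq_0 by blast
  then show ?thesis using 1 2 by simp
qed

lemma abs_rep_eq: "rl_eq (rep_RL (abs_RL e)) e"
  using RL.abs_eq_iff Quotient3_abs_rep[OF Quotient3_RL] by metis



fun rnl :: "'y RL list \<Rightarrow> 'y RL" where
  "rnl [] = 0"
| "rnl [x] = x"
| "rnl (x # xs) = br x (rnl xs)"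

lemma rnl_cons: "xs \<noteq> [] \<Longrightarrow> rnl (x # xs) = br x (rnl xs)"
  by (cases xs) auto

lemma rnorm_cons: "ys \<noteq> [] \<Longrightarrow> rnorm (y # ys) = Br (Gen y) (rnorm ys)"
  by (cases ys) auto

lemma abs_rnorm: "abs_RL (rnorm ys) = rnl (map g ys)"
  by (induction ys rule: rnorm.induct)
     (auto simp: zero_RL.abs_eq rl_gen.abs_eq rl_br.abs_eq[symmetric])

lemma rnl_rel: "2 \<le> length ys \<Longrightarrow> \<not> distinct ys \<Longrightarrow> rnl (map g ys) = 0"
  by (metis abs_rnorm rl_eq.rel RL.abs_eq_iff zero_RL.abs_eq)

inductive_set adsp :: "'y \<Rightarrow> 'y RL set" for z where
  gen: "rnl (map g (xs @ [z])) \<in> adsp z"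
| zero: "0 \<in> adsp z"
| add: "a \<in> adsp z \<Longrightarrow> b \<in> adsp z \<Longrightarrow> a + b \<in> adsp z"
| neg: "a \<in> adsp z \<Longrightarrow> - a \<in> adsp z"

lemma adsp_diff: "a \<in> adsp z \<Longrightarrow> b \<in> adsp z \<Longrightarrow> a - b \<in> adsp z"
  unfolding diff_conv_add_uminus by (intro adsp.add adsp.neg)

lemma adsp_br_gen: "a \<in> adsp z \<Longrightarrow> br (g x) a \<in> adsp z"
proof (induction rule: adsp.induct)
  case (gen xs)
  have "br (g x) (rnl (map g (xs @ [z]))) = rnl (map g ((x # xs) @ [z]))"
    by (simp add: rnl_cons)
  then show ?case using adsp.gen by metis
next
  case zero then show ?case by (simp add: adsp.zero)
next
  case (add a b) then show ?case by (simp add: br_add_r adsp.add)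
next
  case (neg a) then show ?case by (simp add: adsp.neg)
qed

lemma adsp_br: "a \<in> adsp z \<Longrightarrow> br x a \<in> adsp z"
proof (induction x arbitrary: a rule: RL.abs_induct)
  case (1 e)
  then show ?case
  proof (induction e arbitrary: a)
    case (Gen y) then show ?case by (simp add: rl_gen.abs_eq[symmetric] adsp_br_gen)
  next
    case Zero then show ?case by (simp add: zero_RL.abs_eq[symmetric] adsp.zero)
  next
    case (Add e1 e2) then show ?case
      by (simp add: plus_RL.abs_eq[symmetric] br_add_l adsp.add)
  next
    case (Neg e) then show ?case
      by (simp add: uminus_RL.abs_eq[symmetric] adsp.neg)
  next
    case (Br e1 e2) then show ?case
      by (simp add: rl_br.abs_eq[symmetric] br_left_jac adsp_diff)
  qed
qed

lemma ideal_adsp: "a \<in> rl_ideal (g z) \<Longrightarrow> a \<in> adsp z"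
proof (induction rule: rl_ideal.induct)
  case gen
  have "g z = rnl (map g ([] @ [z]))" by simp
  then show ?case by (metis adsp.gen)
next
  case (br_r a x)
  then show ?case by (metis br_anti adsp_br adsp.neg)
next
  case zero then show ?case by (rule adsp.zero)
next
  case (add a b) then show ?case by (metis adsp.add)
next
  case (neg a) then show ?case by (metis adsp.neg)
next
  case (br_l a x) then show ?case by (metis adsp_br)
qed

lemma adsp_abel: "a \<in> adsp z \<Longrightarrow> c \<in> adsp z \<Longrightarrow> br a c = 0"
proof (induction arbitrary: c rule: adsp.induct)
  case (gen xs)
  then show ?case
  proof (induction xs arbitrary: c)
    case Nil
    from Nil.prems show ?case
    proof (induction rule: adsp.induct)
      case (gen ws)
      have "br (g z) (rnl (map g (ws @ [z]))) = rnl (map g (z # ws @ [z]))"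
        by (simp add: rnl_cons)
      also have "\<dots> = 0" by (rule rnl_rel) auto
      finally show ?case by simp
    next
      case zero then show ?case by simp
    next
      case (add a b) then show ?case by (simp add: br_add_r)
    next
      case (neg a) then show ?case by simp
    qed
  next
    case (Cons x xs)
    have e: "rnl (map g ((x # xs) @ [z])) = br (g x) (rnl (map g (xs @ [z])))"
      by (simp add: rnl_cons)
    show ?case unfolding e br_left_jac
      using Cons.IH[OF Cons.prems] Cons.IH[OF adsp_br_gen[OF Cons.prems]] by simp
  qed
next
  case zero then show ?case by simp
next
  case (add a b) then show ?case by (simp add: br_add_l)
next
  case (neg a) then show ?case by simp
qed

lemma ideal_abel: "a \<in> rl_ideal (g z) \<Longrightarrow> c \<in> rl_ideal (g z) \<Longrightarrow> br a c = 0"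
  by (rule adsp_abel[OF ideal_adsp ideal_adsp])

lemma ideal_diff: "a \<in> rl_ideal z \<Longrightarrow> b \<in> rl_ideal z \<Longrightarrow> a - b \<in> rl_ideal z"
  unfolding diff_conv_add_uminus by (rule rl_ideal.add, assumption, rule rl_ideal.neg, assumption)

lemma rnl_ideal: "k < length sl \<Longrightarrow> sl ! k \<in> rl_ideal z \<Longrightarrow> rnl sl \<in> rl_ideal z"
proof (induction sl arbitrary: k rule: rnl.induct)
  case 1 then show ?case by simp
next
  case (2 x) then show ?case by simp
next
  case (3 x y xs)
  show ?case
  proof (cases k)
    case 0
    then have "x \<in> rl_ideal z" using 3(3) by simp
    then show ?thesis by (simp add: rl_ideal.br_r)
  next
    case (Suc k')
    have a1: "k' < length (y # xs)" using 3(2) Suc by simp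
    have a2: "(y # xs) ! k' \<in> rl_ideal z" using 3(3) Suc by simp
    have "rnl (y # xs) \<in> rl_ideal z" by (rule 3(1)[OF a1 a2])
    then show ?thesis by (simp add: rl_ideal.br_l)
  qed
qed

lemma rnl_zero_two:
  assumes "p < q" "q < length sl" "sl ! p \<in> rl_ideal (g z)" "sl ! q \<in> rl_ideal (g z)"
  shows "rnl sl = 0"
  using assms
proof (induction sl arbitrary: p q rule: rnl.induct)
  case 1 then show ?case by simp
next
  case (2 x) then show ?case by simp
next
  case (3 x y xs)
  obtain q' where q: "q = Suc q'" using 3(2) by (cases q) auto
  show ?case
  proof (cases p)
    case 0
    have "rnl (y # xs) \<in> rl_ideal (g z)"
      using 3(3,5) q by (intro rnl_ideal[of q']) auto
    moreover have "x \<in> rl_ideal (g z)" using 3(4) 0 by simp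
    ultimately show ?thesis by (simp add: ideal_abel)
  next
    case (Suc p')
    have a1: "p' < q'" using 3(2) q Suc by simp
    have a2: "q' < length (y # xs)" using 3(3) q by simp
    have a3: "(y # xs) ! p' \<in> rl_ideal (g z)" using 3(4) Suc by simp
    have a4: "(y # xs) ! q' \<in> rl_ideal (g z)" using 3(5) q by simp
    have "rnl (y # xs) = 0" by (rule 3(1)[OF a1 a2 a3 a4])
    then show ?thesis by simp
  qed
qed

lemma rnl_upd_add: "i < length l \<Longrightarrow> rnl (l[i := a + b]) = rnl (l[i := a]) + rnl (l[i := b])"
proof (induction l arbitrary: i)
  case Nil then show ?case by simp
next
  case (Cons x l)
  show ?case
  proof (cases i)
    case 0 then show ?thesis
      by (cases "l = []") (simp_all add: rnl_cons br_add_l)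
  next
    case (Suc j)
    then have j: "j < length l" using Cons.prems by simp
    then have "l \<noteq> []" by auto
    then show ?thesis using Suc Cons.IH[OF j] by (simp add: rnl_cons br_add_r)
  qed
qed

lemma br_sum_r: "br a (sum f A) = sum (\<lambda>i. br a (f i)) A"
  by (induction A rule: infinite_finite_induct) (auto simp: br_add_r)



lemmas abs_simps = plus_RL.abs_eq[symmetric] uminus_RL.abs_eq[symmetric] zero_RL.abs_eq[symmetric]
  rl_br.abs_eq[symmetric] rl_gen.abs_eq[symmetric]

primrec Dx :: "('y \<Rightarrow> 'y RL) \<Rightarrow> 'y lexpr \<Rightarrow> 'y RL" where
  "Dx f (Gen y) = f y"
| "Dx f Zero = 0"
| "Dx f (Add a b) = Dx f a + Dx f b"
| "Dx f (Neg a) = - Dx f a"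
| "Dx f (Br a b) = br (Dx f a) (abs_RL b) + br (abs_RL a) (Dx f b)"

lemma rnl_cons_upd: "L \<noteq> [] \<Longrightarrow> rnl (x # L[i := v]) = br x (rnl (L[i := v]))"
  by (rule rnl_cons) (metis length_0_conv length_list_update)

lemma sum_shift_help:
  "(\<Sum>i<length (y # l). rnl ((map g (y # l))[i := h ((y # l) ! i)])) =
   rnl (h y # map g l) + (\<Sum>i<length l. rnl (g y # (map g l)[i := h (l ! i)]))"
  unfolding length_Cons sum.lessThan_Suc_shift by simp

lemma Dx_rnorm: "Dx f (rnorm ys) = (\<Sum>i<length ys. rnl ((map g ys)[i := f (ys ! i)]))"
proof (induction ys rule: rnorm.induct)
  case 1 then show ?case by simp
next
  case (2 y) then show ?case by simp
next
  case (3 y y2 ys)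
  define l where "l = y2 # ys"
  have ln: "l \<noteq> []" "map g l \<noteq> []" by (simp_all add: l_def)
  have IH: "Dx f (rnorm l) = (\<Sum>i<length l. rnl ((map g l)[i := f (l ! i)]))"
    using 3 by (simp add: l_def)
  have "Dx f (rnorm (y # l)) = br (f y) (rnl (map g l)) + br (g y) (Dx f (rnorm l))"
    using ln by (simp add: rnorm_cons abs_rnorm rl_gen.abs_eq)
  also have "\<dots> = rnl (f y # map g l) +
      (\<Sum>i<length l. br (g y) (rnl ((map g l)[i := f (l ! i)])))"
    unfolding IH br_sum_r using ln by (simp add: rnl_cons)
  also have "\<dots> = rnl (f y # map g l) +
      (\<Sum>i<length l. rnl (g y # (map g l)[i := f (l ! i)]))"
    using rnl_cons_upd[OF ln(2)] by simp
  also have "\<dots> = (\<Sum>i<length (y # l). rnl ((map g (y # l))[i := f ((y # l) ! i)]))"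
    by (rule sum_shift_help[symmetric])
  finally show ?case by (simp add: l_def)
qed

lemma rnl_two_slots:
  assumes "p \<noteq> q" "p < length sl" "q < length sl"
    "sl ! p \<in> rl_ideal (g z)" "sl ! q \<in> rl_ideal (g z)"
  shows "rnl sl = 0"
proof (cases "p < q")
  case True then show ?thesis using assms by (intro rnl_zero_two[where p=p and q=q and z=z]) auto
next
  case False then have "q < p" using assms(1) by simp
  then show ?thesis using assms by (intro rnl_zero_two[where p=q and q=p and z=z]) auto
qed

lemma caseA:
  assumes "p \<noteq> q" "p < length ys" "q < length ys" "p \<noteq> i" "q \<noteq> i" "ys ! p = ys ! q"
  shows "rnl ((map g ys)[i := v]) = 0"
  by (rule rnl_two_slots[of p q _ "ys ! p"]) (use assms in \<open>auto intro: rl_ideal.gen\<close>)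

lemma term_zero:
  assumes len: "2 \<le> length ys" and nd: "\<not> distinct ys" and not2: "\<forall>z. ys \<noteq> [z, z]"
    and i: "i < length ys" and fJ: "f (ys ! i) \<in> J (ys ! i)"
  shows "rnl ((map g ys)[i := f (ys ! i)]) = 0"
proof -
  obtain p q where pq: "p < length ys" "q < length ys" "p \<noteq> q" "ys ! p = ys ! q"
    using nd by (auto simp: distinct_conv_nth)
  show ?thesis
  proof (cases "p \<noteq> i \<and> q \<noteq> i")
    case True then show ?thesis using caseA pq by blast
  next
    case False
    then obtain j where j: "j < length ys" "j \<noteq> i" "ys ! j = ys ! i"
      using pq by metis
    define z where "z = ys ! i"
    show ?thesis
    proof (cases "\<forall>k<length ys. ys ! k = z")
      case True
      have "length ys \<noteq> 2"
      proof
        assume "length ys = 2"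
        then have "ys = [ys ! 0, ys ! 1]"
          by (cases ys; cases "tl ys"; auto)
        moreover have "ys ! 0 = z" "ys ! 1 = z" using True \<open>length ys = 2\<close> by auto
        ultimately show False using not2 by metis
      qed
      then have l3: "3 \<le> length ys" using len by simp
      obtain p' q' where "p' < q'" "q' < 3" "p' \<noteq> i" "q' \<noteq> i"
      proof (cases i)
        case 0 then show ?thesis using that[of 1 2] by simp
      next
        case (Suc i') then show ?thesis
          by (cases i') (use that[of 0 2] that[of 0 1] in auto)
      qed
      then show ?thesis using True l3
        by (intro caseA[of p' q']) auto
    next
      case False
      then obtain k where k: "k < length ys" "ys ! k \<noteq> z" by auto
      from fJ obtain a b where ab: "f z = a + b" "a \<in> rl_ideal (g z)"
        "b \<in> (\<Inter>y'\<in>{y'. y' \<noteq> z}. rl_ideal (g y'))"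
        unfolding J_def z_def by blast
      have b: "b \<in> rl_ideal (g (ys ! k))" using ab(3) k(2) by auto
      have il: "i < length (map g ys)" using i by simp
      have ki: "k \<noteq> i" using k z_def by auto
      have "rnl ((map g ys)[i := a]) = 0"
        by (rule rnl_two_slots[of i j _ z]) (use i j ab(2) in \<open>auto simp: z_def intro: rl_ideal.gen\<close>)
      moreover have "rnl ((map g ys)[i := b]) = 0"
        by (rule rnl_two_slots[of i k _ "ys ! k"])
           (use i k b ki in \<open>auto simp: z_def intro: rl_ideal.gen\<close>)
      ultimately show ?thesis
        using rnl_upd_add[OF il, of a b] ab(1) by (simp add: z_def)
    qed
  qed
qed

lemma Dx_rel:
  assumes "2 \<le> length ys" "\<not> distinct ys" "\<forall>y. f y \<in> J y"
  shows "Dx f (rnorm ys) = 0"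
proof (cases "\<exists>z. ys = [z, z]")
  case True
  then obtain z where "ys = [z, z]" by blast
  then show ?thesis by (simp add: rl_gen.abs_eq[symmetric] br_anti[of "g z"])
next
  case False
  show ?thesis unfolding Dx_rnorm
  proof (intro sum.neutral ballI)
    fix i assume "i \<in> {..<length ys}"
    then show "rnl ((map g ys)[i := f (ys ! i)]) = 0"
      using assms False by (intro term_zero) auto
  qed
qed

lemma Dx_resp:
  assumes hf: "\<forall>y. f y \<in> J y"
  shows "rl_eq a b \<Longrightarrow> Dx f a = Dx f b"
proof (induction rule: rl_eq.induct)
  case (cong_br a b c d)
  then show ?case using RL.abs_eq_iff by (metis Dx.simps(5))
next
  case (br_add_left a b c)
  then show ?case by (simp add: abs_simps br_add_l br_add_r algebra_simps)
next
  case (br_add_right a b c)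
  then show ?case by (simp add: abs_simps br_add_l br_add_r algebra_simps)
next
  case (br_alt a)
  then show ?case by (simp add: br_anti[of "abs_RL a"])
next
  case (jacobi a b c)
  let ?A = "abs_RL a" and ?B = "abs_RL b" and ?C = "abs_RL c"
  have j1: "br (Dx f a) (br ?B ?C) + (br ?B (br ?C (Dx f a)) + br ?C (br (Dx f a) ?B)) = 0"
    by (rule br_jac)
  have j2: "br ?A (br (Dx f b) ?C) + (br (Dx f b) (br ?C ?A) + br ?C (br ?A (Dx f b))) = 0"
    by (rule br_jac)
  have j3: "br ?A (br ?B (Dx f c)) + (br ?B (br (Dx f c) ?A) + br (Dx f c) (br ?A ?B)) = 0"
    by (rule br_jac)
  have "Dx f (Add (Br a (Br b c)) (Add (Br b (Br c a)) (Br c (Br a b)))) =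
    (br (Dx f a) (br ?B ?C) + (br ?B (br ?C (Dx f a)) + br ?C (br (Dx f a) ?B))) +
    (br ?A (br (Dx f b) ?C) + (br (Dx f b) (br ?C ?A) + br ?C (br ?A (Dx f b)))) +
    (br ?A (br ?B (Dx f c)) + (br ?B (br (Dx f c) ?A) + br (Dx f c) (br ?A ?B)))"
    by (simp add: abs_simps br_add_r algebra_simps)
  then show ?case using j1 j2 j3 by simp
next
  case (rel ys)
  then show ?case using Dx_rel hf by simp
qed (auto simp: algebra_simps)


lemma abs_rep: "abs_RL (rep_RL x) = x"
  by (rule Quotient3_abs_rep[OF Quotient3_RL])

lemma deriv_zero: "rl_derivation d \<Longrightarrow> d 0 = 0"
  unfolding rl_derivation_def by (metis add_cancel_right_right add_0)

lemma deriv_neg: "rl_derivation d \<Longrightarrow> d (- a) = - d a"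
  using deriv_zero[of d] unfolding rl_derivation_def
  by (metis add.right_inverse add_eq_0_iff)

lemma deriv_unique:
  assumes d1: "rl_derivation d1" and d2: "rl_derivation d2"
    and eq: "\<forall>y. d1 (g y) = d2 (g y)"
  shows "d1 = d2"
proof
  fix x :: "'a RL"
  show "d1 x = d2 x"
  proof (induction x rule: RL.abs_induct)
    case (1 e)
    show ?case
    proof (induction e)
      case (Gen y) then show ?case using eq by (simp add: rl_gen.abs_eq[symmetric])
    next
      case Zero then show ?case using deriv_zero[OF d1] deriv_zero[OF d2]
        by (simp add: zero_RL.abs_eq[symmetric])
    next
      case (Add e1 e2) then show ?case using d1 d2
        by (simp add: plus_RL.abs_eq[symmetric] rl_derivation_def)
    next
      case (Neg e) then show ?case using deriv_neg[OF d1] deriv_neg[OF d2]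
        by (simp add: uminus_RL.abs_eq[symmetric])
    next
      case (Br e1 e2) then show ?case using d1 d2
        by (simp add: rl_br.abs_eq[symmetric] rl_derivation_def)
    qed
  qed
qed

lemma deriv_exists:
  assumes hf: "\<forall>y. f y \<in> rl_geq2 \<and> f y \<in> J y"
  shows "rl_derivation (\<lambda>x. Dx f (rep_RL x)) \<and> (\<forall>y. Dx f (rep_RL (g y)) = f y)"
proof -
  have hJ: "\<forall>y. f y \<in> J y" using hf by blast
  have da: "Dx f (rep_RL (abs_RL e)) = Dx f e" for e
    by (rule Dx_resp[OF hJ abs_rep_eq])
  have add: "a + b = abs_RL (Add (rep_RL a) (rep_RL b))" for a b :: "'a RL"
    by (metis abs_rep plus_RL.abs_eq)
  have brr: "br a b = abs_RL (Br (rep_RL a) (rep_RL b))" for a b :: "'a RL"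
    by (metis abs_rep rl_br.abs_eq)
  have gen: "Dx f (rep_RL (g y)) = f y" for y
    by (simp add: rl_gen.abs_eq da)
  show ?thesis
    unfolding rl_derivation_def
    by (auto simp: gen hf add[of _ _] brr[of _ _] da abs_rep
             simp del: plus_RL.abs_eq rl_br.abs_eq)
qed



primrec Hx :: "('y \<Rightarrow> 'y RL) \<Rightarrow> 'y lexpr \<Rightarrow> 'y RL" where
  "Hx \<phi> (Gen y) = \<phi> y"
| "Hx \<phi> Zero = 0"
| "Hx \<phi> (Add a b) = Hx \<phi> a + Hx \<phi> b"
| "Hx \<phi> (Neg a) = - Hx \<phi> a"
| "Hx \<phi> (Br a b) = br (Hx \<phi> a) (Hx \<phi> b)"

lemma Hx_rnorm: "Hx \<phi> (rnorm ys) = rnl (map \<phi> ys)"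
  by (induction ys rule: rnorm.induct) auto

lemma Hx_resp:
  assumes hr: "\<forall>ys. 2 \<le> length ys \<longrightarrow> \<not> distinct ys \<longrightarrow> rnl (map \<phi> ys) = 0"
  shows "rl_eq a b \<Longrightarrow> Hx \<phi> a = Hx \<phi> b"
proof (induction rule: rl_eq.induct)
  case (br_add_left a b c) then show ?case by (simp add: br_add_l)
next
  case (br_add_right a b c) then show ?case by (simp add: br_add_r)
next
  case (br_alt a) then show ?case by (simp add: Submission.br_alt)
next
  case (jacobi a b c) then show ?case using br_jac by simp
next
  case (rel ys) then show ?case using hr by (simp add: Hx_rnorm)
qed (auto simp: algebra_simps)

lemma rnl_has_zero: "0 \<in> set l \<Longrightarrow> rnl l = 0"
proof (induction l rule: rnl.induct)
  case (3 x y xs)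
  then show ?case by (cases "x = 0") auto
qed auto

primrec Sub :: "'y \<Rightarrow> 'y lexpr \<Rightarrow> 'y lexpr" where
  "Sub z (Gen y) = (if y = z then Zero else Gen y)"
| "Sub z Zero = Zero"
| "Sub z (Add a b) = Add (Sub z a) (Sub z b)"
| "Sub z (Neg a) = Neg (Sub z a)"
| "Sub z (Br a b) = Br (Sub z a) (Sub z b)"

definition phz :: "'y \<Rightarrow> 'y \<Rightarrow> 'y RL" where
  "phz z y = (if y = z then 0 else g y)"

lemma abs_Sub: "abs_RL (Sub z e) = Hx (phz z) e"
  by (induction e) (auto simp: abs_simps phz_def)

lemma phz_rel: "\<forall>ys. 2 \<le> length ys \<longrightarrow> \<not> distinct ys \<longrightarrow> rnl (map (phz z) ys) = 0"
proof (intro allI impI)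
  fix ys :: "'a list" assume l: "2 \<le> length ys" and nd: "\<not> distinct ys"
  show "rnl (map (phz z) ys) = 0"
  proof (cases "z \<in> set ys")
    case True
    then have "0 \<in> set (map (phz z) ys)" by (force simp: phz_def)
    then show ?thesis by (rule rnl_has_zero)
  next
    case False
    then have e: "map (phz z) ys = map g ys" by (auto simp: phz_def)
    show ?thesis unfolding e by (rule rnl_rel[OF l nd])
  qed
qed

lemma Sub_resp: "rl_eq a b \<Longrightarrow> rl_eq (Sub z a) (Sub z b)"
  using Hx_resp[OF phz_rel] abs_Sub RL.abs_eq_iff by metis

primrec lets :: "'y lexpr \<Rightarrow> 'y set" where
  "lets (Gen y) = {y}"
| "lets Zero = {}"
| "lets (Add a b) = lets a \<union> lets b"
| "lets (Neg a) = lets a"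
| "lets (Br a b) = lets a \<union> lets b"

lemma lets_Sub: "lets (Sub z e) \<subseteq> lets e - {z}"
  by (induction e) auto

lemma Sub_diff: "abs_RL e - abs_RL (Sub z e) \<in> rl_ideal (g z)"
proof (induction e)
  case (Gen y)
  show ?case
  proof (cases "y = z")
    case True then show ?thesis by (simp add: abs_simps rl_ideal.gen)
  next
    case False then show ?thesis by (simp add: abs_simps rl_ideal.zero)
  qed
next
  case Zero then show ?case by (simp add: abs_simps rl_ideal.zero)
next
  case (Add e1 e2)
  have "abs_RL (Add e1 e2) - abs_RL (Sub z (Add e1 e2)) =
    (abs_RL e1 - abs_RL (Sub z e1)) + (abs_RL e2 - abs_RL (Sub z e2))"
    by (simp add: abs_simps algebra_simps)
  then show ?case using Add by (simp add: rl_ideal.add)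
next
  case (Neg e)
  have "abs_RL (Neg e) - abs_RL (Sub z (Neg e)) = - (abs_RL e - abs_RL (Sub z e))"
    by (simp add: abs_simps algebra_simps)
  then show ?case using Neg rl_ideal.neg by metis
next
  case (Br e1 e2)
  let ?A = "abs_RL e1" and ?A' = "abs_RL (Sub z e1)" and ?B = "abs_RL e2" and ?B' = "abs_RL (Sub z e2)"
  have "abs_RL (Br e1 e2) - abs_RL (Sub z (Br e1 e2)) = br (?A - ?A') ?B + br ?A' (?B - ?B')"
    by (simp add: abs_simps br_diff_l br_diff_r)
  moreover have "br (?A - ?A') ?B \<in> rl_ideal (g z)" using Br(1) by (rule rl_ideal.br_r)
  moreover have "br ?A' (?B - ?B') \<in> rl_ideal (g z)" using Br(2) by (rule rl_ideal.br_l)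
  ultimately show ?case by (simp add: rl_ideal.add)
qed



definition Lop :: "'y \<Rightarrow> ('y list \<Rightarrow> int) \<Rightarrow> 'y list \<Rightarrow> int" where
  "Lop y q w = (case w of [] \<Rightarrow> 0 | a # w' \<Rightarrow> if a = y \<and> distinct w then q w' else 0)"

lemma Lop_Nil[simp]: "Lop y q [] = 0" by (simp add: Lop_def)
lemma Lop_Cons[simp]: "Lop y q (a # w) = (if a = y \<and> distinct (a # w) then q w else 0)"
  by (simp add: Lop_def)

primrec rho :: "'y lexpr \<Rightarrow> ('y list \<Rightarrow> int) \<Rightarrow> 'y list \<Rightarrow> int" where
  "rho (Gen y) q = Lop y q"
| "rho Zero q = (\<lambda>w. 0)"
| "rho (Add a b) q = (\<lambda>w. rho a q w + rho b q w)"
| "rho (Neg a) q = (\<lambda>w. - rho a q w)"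
| "rho (Br a b) q = (\<lambda>w. rho a (rho b q) w - rho b (rho a q) w)"

lemma rho_lin: "rho e (\<lambda>w. p w + q w) = (\<lambda>w. rho e p w + rho e q w) \<and>
                rho e (\<lambda>w. - p w) = (\<lambda>w. - rho e p w)"
proof (induction e arbitrary: p q)
  case (Br a b)
  show ?case
  proof (intro conjI ext)
    fix w
    have "rho a (rho b (\<lambda>w. p w + q w)) = rho a (\<lambda>w. rho b p w + rho b q w)"
      using Br(2) by simp
    also have "\<dots> = (\<lambda>w. rho a (rho b p) w + rho a (rho b q) w)"
      using Br(1) by simp
    finally have 1: "rho a (rho b (\<lambda>w. p w + q w)) = (\<lambda>w. rho a (rho b p) w + rho a (rho b q) w)" .
    have "rho b (rho a (\<lambda>w. p w + q w)) = rho b (\<lambda>w. rho a p w + rho a q w)"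
      using Br(1) by simp
    also have "\<dots> = (\<lambda>w. rho b (rho a p) w + rho b (rho a q) w)"
      using Br(2) by simp
    finally have 2: "rho b (rho a (\<lambda>w. p w + q w)) = (\<lambda>w. rho b (rho a p) w + rho b (rho a q) w)" .
    show "rho (Br a b) (\<lambda>w. p w + q w) w = rho (Br a b) p w + rho (Br a b) q w"
      using 1 2 by simp
    have "rho a (rho b (\<lambda>w. - p w)) = rho a (\<lambda>w. - rho b p w)"
      using Br(2) by simp
    also have "\<dots> = (\<lambda>w. - rho a (rho b p) w)"
      using Br(1) by simp
    finally have 3: "rho a (rho b (\<lambda>w. - p w)) = (\<lambda>w. - rho a (rho b p) w)" .
    have "rho b (rho a (\<lambda>w. - p w)) = rho b (\<lambda>w. - rho a p w)"
      using Br(1) by simp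
    also have "\<dots> = (\<lambda>w. - rho b (rho a p) w)"
      using Br(2) by simp
    finally have 4: "rho b (rho a (\<lambda>w. - p w)) = (\<lambda>w. - rho b (rho a p) w)" .
    show "rho (Br a b) (\<lambda>w. - p w) w = - rho (Br a b) p w"
      using 3 4 by simp
  qed
qed (auto simp: Lop_def fun_eq_iff split: list.split)

lemma rho_add: "rho e (\<lambda>w. p w + q w) w = rho e p w + rho e q w"
  using rho_lin by metis
lemma rho_neg: "rho e (\<lambda>w. - p w) w = - rho e p w"
  using rho_lin by metis
lemma rho_diff: "rho e (\<lambda>w. p w - q w) w = rho e p w - rho e q w"
proof -
  have "rho e (\<lambda>w. p w - q w) w = rho e (\<lambda>w. p w + (\<lambda>w. - q w) w) w" by simp
  also have "\<dots> = rho e p w + rho e (\<lambda>w. - q w) w" by (rule rho_add)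
  finally show ?thesis by (simp add: rho_neg)
qed

lemma rho_supp:
  "rho e q w \<noteq> 0 \<Longrightarrow> distinct w \<and> (\<exists>u v. w = u @ v \<and> u \<noteq> [] \<and> set u \<subseteq> lets e \<and> q v \<noteq> 0)"
proof (induction e arbitrary: q w)
  case (Gen y)
  then obtain w' where "w = y # w'" "distinct w" "q w' \<noteq> 0"
    by (cases w) (auto split: if_splits)
  then show ?case by (intro conjI exI[of _ "[y]"] exI[of _ w']) auto
next
  case (Add a b)
  then have "rho a q w \<noteq> 0 \<or> rho b q w \<noteq> 0" by auto
  then show ?case using Add.IH by fastforce
next
  case (Neg a) then show ?case by auto
next
  case (Br a b)
  then have "rho a (rho b q) w \<noteq> 0 \<or> rho b (rho a q) w \<noteq> 0" by auto
  then show ?case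
  proof
    assume "rho a (rho b q) w \<noteq> 0"
    then obtain u v where 1: "distinct w" "w = u @ v" "u \<noteq> []" "set u \<subseteq> lets a" "rho b q v \<noteq> 0"
      using Br.IH(1) by blast
    then obtain u' v' where "v = u' @ v'" "u' \<noteq> []" "set u' \<subseteq> lets b" "q v' \<noteq> 0"
      using Br.IH(2) by blast
    then show ?case using 1 by (intro conjI exI[of _ "u @ u'"] exI[of _ v']) auto
  next
    assume "rho b (rho a q) w \<noteq> 0"
    then obtain u v where 1: "distinct w" "w = u @ v" "u \<noteq> []" "set u \<subseteq> lets b" "rho a q v \<noteq> 0"
      using Br.IH(2) by blast
    then obtain u' v' where "v = u' @ v'" "u' \<noteq> []" "set u' \<subseteq> lets a" "q v' \<noteq> 0"
      using Br.IH(1) by blast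
    then show ?case using 1 by (intro conjI exI[of _ "u @ u'"] exI[of _ v']) auto
  qed
qed simp

lemma rho_rnorm_supp:
  "rho (rnorm ys) q w \<noteq> 0 \<Longrightarrow>
     distinct w \<and> (\<exists>u v. w = u @ v \<and> set u = set ys \<and> length u = length ys \<and> q v \<noteq> 0)"
proof (induction ys arbitrary: q w rule: rnorm.induct)
  case 1 then show ?case by simp
next
  case (2 y)
  then obtain w' where "w = y # w'" "distinct w" "q w' \<noteq> 0"
    by (cases w) (auto split: if_splits)
  then show ?case by (intro conjI exI[of _ "[y]"] exI[of _ w']) auto
next
  case (3 y y2 ys)
  let ?R = "rnorm (y2 # ys)"
  have "Lop y (rho ?R q) w \<noteq> 0 \<or> rho ?R (Lop y q) w \<noteq> 0" using 3(2) by auto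
  then show ?case
  proof
    assume a: "Lop y (rho ?R q) w \<noteq> 0"
    then obtain w' where w: "w = y # w'" "distinct w" "rho ?R q w' \<noteq> 0"
      by (cases w) (auto split: if_splits)
    then obtain u v where "w' = u @ v" "set u = set (y2 # ys)" "length u = length (y2 # ys)" "q v \<noteq> 0"
      using 3(1) by blast
    then show ?case using w by (intro conjI exI[of _ "y # u"] exI[of _ v]) auto
  next
    assume "rho ?R (Lop y q) w \<noteq> 0"
    then obtain u v where 1: "distinct w" "w = u @ v" "set u = set (y2 # ys)"
      "length u = length (y2 # ys)" "Lop y q v \<noteq> 0"
      using 3(1) by blast
    then obtain v' where "v = y # v'" "q v' \<noteq> 0"
      by (cases v) (auto split: if_splits)
    then show ?case using 1 by (intro conjI exI[of _ "u @ [y]"] exI[of _ v']) auto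
  qed
qed

lemma rho_rel: "\<not> distinct ys \<Longrightarrow> rho (rnorm ys) q w = 0"
proof (rule ccontr)
  assume nd: "\<not> distinct ys" and "rho (rnorm ys) q w \<noteq> 0"
  then obtain u v where "distinct w" "w = u @ v" "set u = set ys" "length u = length ys"
    using rho_rnorm_supp by blast
  then have "distinct u" by simp
  then have "card (set ys) = length ys" using \<open>set u = set ys\<close> \<open>length u = length ys\<close>
    by (metis distinct_card)
  then show False using nd card_distinct by blast
qed

lemma rho_resp: "rl_eq a b \<Longrightarrow> rho a = rho b"
proof (induction rule: rl_eq.induct)
  case (cong_add a b c d) then show ?case by simp
next
  case (cong_neg a b) then show ?case by simp
next
  case (cong_br a b c d) then show ?case by simp
next
  case (br_add_left a b c) then show ?case by (simp add: fun_eq_iff rho_add)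
next
  case (br_add_right a b c) then show ?case by (simp add: fun_eq_iff rho_add)
next
  case (jacobi a b c) then show ?case by (simp add: fun_eq_iff rho_diff)
next
  case (rel ys) then show ?case by (simp add: fun_eq_iff rho_rel)
qed (auto simp: fun_eq_iff)

definition RR :: "'y RL \<Rightarrow> ('y list \<Rightarrow> int) \<Rightarrow> 'y list \<Rightarrow> int" where
  "RR x = rho (rep_RL x)"

lemma RR_abs: "RR (abs_RL e) = rho e"
  unfolding RR_def by (rule rho_resp[OF abs_rep_eq])

lemma RR_add: "RR (a + b) q w = RR a q w + RR b q w"
  by (metis RR_abs abs_rep plus_RL.abs_eq rho.simps(3))
lemma RR_neg: "RR (- a) q w = - RR a q w"
  by (metis RR_abs abs_rep uminus_RL.abs_eq rho.simps(4))
lemma RR_zero: "RR 0 q w = 0"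
  by (metis RR_abs zero_RL.abs_eq rho.simps(2))
lemma RR_br: "RR (br a b) q w = RR a (RR b q) w - RR b (RR a q) w"
  by (metis RR_abs abs_rep rl_br.abs_eq rho.simps(5))
lemma RR_gen: "RR (g y) = Lop y"
  by (metis RR_abs rl_gen.abs_eq rho.simps(1) ext)

definition dlt :: "'y list \<Rightarrow> int" where "dlt w = (if w = [] then 1 else 0)"



definition canon :: "'y list \<Rightarrow> bool" where
  "canon l \<longleftrightarrow> l \<noteq> [] \<and> distinct l \<and> last l = (SOME x. x \<in> set l)"

lemma rho_dlt_supp: "rho e dlt w \<noteq> 0 \<Longrightarrow> distinct w \<and> w \<noteq> [] \<and> set w \<subseteq> lets e"
  using rho_supp[of e dlt w] by (auto simp: dlt_def split: if_splits)

lemma LastX: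
  assumes "x \<notin> set t"
  shows "rho (rnorm (t @ [x])) dlt (w @ [x]) = (if w = t \<and> distinct (w @ [x]) then 1 else 0)"
  using assms
proof (induction t arbitrary: w)
  case Nil
  then show ?case by (cases w) (auto simp: dlt_def)
next
  case (Cons t ts)
  have ne: "ts @ [x] \<noteq> []" by simp
  let ?R = "rnorm (ts @ [x])"
  have tx: "t \<noteq> x" using Cons.prems by auto
  have second: "rho ?R (Lop t dlt) (w @ [x]) = 0"
  proof (rule ccontr)
    assume "rho ?R (Lop t dlt) (w @ [x]) \<noteq> 0"
    then obtain u v where "w @ [x] = u @ v" "Lop t dlt v \<noteq> 0"
      using rho_supp by blast
    moreover from \<open>Lop t dlt v \<noteq> 0\<close> have "v = [t]"
      by (cases v) (auto simp: dlt_def split: if_splits)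
    ultimately show False using tx by simp
  qed
  have "rho (rnorm ((t # ts) @ [x])) dlt (w @ [x]) =
        Lop t (rho ?R dlt) (w @ [x]) - rho ?R (Lop t dlt) (w @ [x])"
    using ne by (simp add: rnorm_cons)
  also have "\<dots> = Lop t (rho ?R dlt) (w @ [x])" using second by simp
  also have "\<dots> = (if w = t # ts \<and> distinct (w @ [x]) then 1 else 0)"
  proof (cases w)
    case Nil then show ?thesis using tx by simp
  next
    case (Cons a w1)
    have ih: "rho ?R dlt (w1 @ [x]) = (if w1 = ts \<and> distinct (w1 @ [x]) then 1 else 0)"
      using Cons.IH \<open>x \<notin> set (t # ts)\<close> by simp
    show ?thesis using Cons ih by auto
  qed
  finally show ?case .
qed

lemma K1:
  assumes c1: "canon l" and c2: "canon l'"
  shows "rho (rnorm l) dlt l' = (if l = l' then 1 else 0)"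
proof (cases "set l = set l'")
  case True
  define x where "x = last l"
  have xl': "last l' = x" using c1 c2 True by (simp add: canon_def x_def)
  have l: "l = butlast l @ [x]" using c1 append_butlast_last_id unfolding canon_def x_def by metis
  have l': "l' = butlast l' @ [x]" using c2 xl' append_butlast_last_id unfolding canon_def by metis
  have xn: "x \<notin> set (butlast l)" using c1 l by (metis canon_def distinct_append distinct.simps(2) not_distinct_conv_prefix distinct_butlast in_set_butlast_appendI) 
  have "rho (rnorm l) dlt l' = (if butlast l' = butlast l \<and> distinct l' then 1 else 0)"
    using LastX[OF xn, of "butlast l'"] l l' by metis
  then show ?thesis using c2 l l' by (auto simp: canon_def)
next
  case False
  have "rho (rnorm l) dlt l' = 0"
  proof (rule ccontr)
    assume "rho (rnorm l) dlt l' \<noteq> 0"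
    then obtain u v where "l' = u @ v" "set u = set l" "dlt v \<noteq> 0"
      using rho_rnorm_supp by blast
    then show False using False by (auto simp: dlt_def split: if_splits)
  qed
  then show ?thesis using False by auto
qed


inductive_set CS :: "'y RL set" where
  cgen: "canon l \<Longrightarrow> rnl (map g l) \<in> CS"
| czero: "0 \<in> CS"
| cadd: "a \<in> CS \<Longrightarrow> b \<in> CS \<Longrightarrow> a + b \<in> CS"
| cneg: "a \<in> CS \<Longrightarrow> - a \<in> CS"

inductive_set SX :: "'y \<Rightarrow> 'y set \<Rightarrow> 'y RL set" for x S where
  sgen: "set t \<union> {x} = S \<Longrightarrow> rnl (map g (t @ [x])) \<in> SX x S"
| szero: "0 \<in> SX x S"
| sadd: "a \<in> SX x S \<Longrightarrow> b \<in> SX x S \<Longrightarrow> a + b \<in> SX x S"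
| sneg: "a \<in> SX x S \<Longrightarrow> - a \<in> SX x S"

lemma SX_diff: "a \<in> SX x S \<Longrightarrow> b \<in> SX x S \<Longrightarrow> a - b \<in> SX x S"
  unfolding diff_conv_add_uminus by (rule sadd, assumption, rule sneg, assumption)

lemma CS_diff: "a \<in> CS \<Longrightarrow> b \<in> CS \<Longrightarrow> a - b \<in> CS"
  unfolding diff_conv_add_uminus by (rule cadd, assumption, rule cneg, assumption)

lemma SX_CS:
  assumes x: "x = (SOME x. x \<in> S)"
  shows "a \<in> SX x S \<Longrightarrow> a \<in> CS"
proof (induction rule: SX.induct)
  case (sgen t)
  show ?case
  proof (cases "distinct (t @ [x])")
    case True
    have "canon (t @ [x])" unfolding canon_def using True sgen x by simp
    then show ?thesis by (rule cgen)
  next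
    case False
    then have "t \<noteq> []" by auto
    then have "2 \<le> length (t @ [x])" by (cases t) auto
    then have "rnl (map g (t @ [x])) = 0" using False by (rule rnl_rel)
    then show ?thesis using czero by simp
  qed
next
  case szero then show ?case by (rule czero)
next
  case (sadd a b) then show ?case by (metis cadd)
next
  case (sneg a) then show ?case by (metis cneg)
qed

lemma SX_ad: "a \<in> SX x T \<Longrightarrow> br (g c) a \<in> SX x (insert c T)"
proof (induction rule: SX.induct)
  case (sgen t)
  have "br (g c) (rnl (map g (t @ [x]))) = rnl (map g ((c # t) @ [x]))" by (simp add: rnl_cons)
  moreover have "set (c # t) \<union> {x} = insert c T" using sgen by auto
  ultimately show ?case by (metis SX.sgen)
next
  case szero then show ?case by (simp add: SX.szero)
next
  case (sadd a b) then show ?case by (simp add: br_add_r SX.sadd)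
next
  case (sneg a) then show ?case by (simp add: SX.sneg)
qed

lemma SX_M: "m \<noteq> [] \<Longrightarrow> v \<in> SX x T \<Longrightarrow> br (rnl (map g m)) v \<in> SX x (set m \<union> T)"
proof (induction m arbitrary: v T)
  case Nil then show ?case by simp
next
  case (Cons a m')
  show ?case
  proof (cases "m' = []")
    case True
    then show ?thesis using SX_ad[OF Cons.prems(2), of a] by simp
  next
    case False
    have e: "rnl (map g (a # m')) = br (g a) (rnl (map g m'))"
      using False by (simp add: rnl_cons)
    have h1: "br (rnl (map g m')) v \<in> SX x (set m' \<union> T)" by (rule Cons.IH[OF False Cons.prems(2)])
    have h1b: "br (g a) (br (rnl (map g m')) v) \<in> SX x (set (a # m') \<union> T)"
      using SX_ad[OF h1, of a] by (simp add: insert_commute)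
    have h2: "br (rnl (map g m')) (br (g a) v) \<in> SX x (set m' \<union> insert a T)"
      by (rule Cons.IH[OF False SX_ad[OF Cons.prems(2)]])
    have h2b: "br (rnl (map g m')) (br (g a) v) \<in> SX x (set (a # m') \<union> T)"
      using h2 by (simp add: Un_insert_right)
    show ?thesis unfolding e br_left_jac using h1b h2b by (rule SX_diff)
  qed
qed

lemma SX_P: "x \<in> set l \<Longrightarrow> rnl (map g l) \<in> SX x (set l)"
proof (induction l)
  case Nil then show ?case by simp
next
  case (Cons a l')
  show ?case
  proof (cases "a = x")
    case True
    show ?thesis
    proof (cases "l' = []")
      case True
      have "rnl (map g ([] @ [x])) \<in> SX x (set ([] :: 'a list) \<union> {x})" by (rule SX.sgen) simp
      then show ?thesis using True \<open>a = x\<close> by simp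
    next
      case False
      have gx: "g x \<in> SX x {x}"
        using SX.sgen[of "[]" x "{x}"] by simp
      have "br (rnl (map g l')) (g x) \<in> SX x (set l' \<union> {x})"
        by (rule SX_M[OF False gx])
      then have "- br (rnl (map g l')) (g x) \<in> SX x (set (a # l'))"
        using True by (simp add: SX.sneg insert_commute)
      moreover have "rnl (map g (a # l')) = - br (rnl (map g l')) (g x)"
        using False True by (simp add: rnl_cons br_anti[of "g x"])
      ultimately show ?thesis by simp
    qed
  next
    case False
    then have x: "x \<in> set l'" using Cons.prems by simp
    then have "l' \<noteq> []" by auto
    then have e: "rnl (map g (a # l')) = br (g a) (rnl (map g l'))" by (simp add: rnl_cons)
    show ?thesis unfolding e using SX_ad[OF Cons.IH[OF x], of a] by simp
  qed
qed

lemma rn_CS: "l \<noteq> [] \<Longrightarrow> rnl (map g l) \<in> CS"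
proof -
  assume "l \<noteq> []"
  define x where "x = (SOME x. x \<in> set l)"
  have "x \<in> set l" unfolding x_def by (rule someI_ex) (use \<open>l \<noteq> []\<close> last_in_set in blast)
  then show ?thesis by (rule SX_CS[OF x_def SX_P])
qed

lemma CS_ad: "a \<in> CS \<Longrightarrow> br (g c) a \<in> CS"
proof (induction rule: CS.induct)
  case (cgen l)
  then have "l \<noteq> []" by (simp add: canon_def)
  then have "br (g c) (rnl (map g l)) = rnl (map g (c # l))" by (simp add: rnl_cons)
  then show ?case using rn_CS[of "c # l"] by simp
next
  case czero then show ?case by (simp add: CS.czero)
next
  case (cadd a b) then show ?case by (simp add: br_add_r CS.cadd)
next
  case (cneg a) then show ?case by (simp add: CS.cneg)
qed

lemma CS_br_rn: "l \<noteq> [] \<Longrightarrow> b \<in> CS \<Longrightarrow> br (rnl (map g l)) b \<in> CS"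
proof (induction l arbitrary: b)
  case Nil then show ?case by simp
next
  case (Cons a l')
  show ?case
  proof (cases "l' = []")
    case True then show ?thesis using CS_ad[OF Cons.prems(2)] by simp
  next
    case False
    have e: "rnl (map g (a # l')) = br (g a) (rnl (map g l'))" using False by (simp add: rnl_cons)
    show ?thesis unfolding e br_left_jac
      by (rule CS_diff[OF CS_ad[OF Cons.IH[OF False Cons.prems(2)]] Cons.IH[OF False CS_ad[OF Cons.prems(2)]]])
  qed
qed

lemma CS_br: "a \<in> CS \<Longrightarrow> b \<in> CS \<Longrightarrow> br a b \<in> CS"
proof (induction rule: CS.induct)
  case (cgen l)
  then have "l \<noteq> []" by (simp add: canon_def)
  then show ?case using cgen CS_br_rn by blast
next
  case czero then show ?case by (simp add: CS.czero)
next
  case (cadd a b) then show ?case by (simp add: br_add_l CS.cadd)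
next
  case (cneg a) then show ?case by (simp add: CS.cneg)
qed

lemma all_CS: "x \<in> CS"
proof (induction x rule: RL.abs_induct)
  case (1 e)
  show ?case
  proof (induction e)
    case (Gen y) then show ?case using rn_CS[of "[y]"] by (simp add: abs_simps)
  next
    case Zero then show ?case by (simp add: abs_simps CS.czero)
  next
    case (Add e1 e2) then show ?case by (simp add: abs_simps CS.cadd)
  next
    case (Neg e) then show ?case by (simp add: abs_simps CS.cneg)
  next
    case (Br e1 e2) then show ?case by (simp add: abs_simps CS_br)
  qed
qed



definition sgr :: "bool \<times> 'y list \<Rightarrow> 'y RL" where
  "sgr p = (if fst p then rnl (map g (snd p)) else - rnl (map g (snd p)))"

definition sumL :: "(bool \<times> 'y list) list \<Rightarrow> 'y RL" where
  "sumL L = sum_list (map sgr L)"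

definition cnt :: "(bool \<times> 'y list) list \<Rightarrow> 'y list \<Rightarrow> int" where
  "cnt L l = sum_list (map (\<lambda>p. if snd p = l then (if fst p then 1 else -1) else 0) L)"

lemma sumL_simps[simp]: "sumL [] = 0" "sumL (p # L) = sgr p + sumL L"
  "sumL (A @ B) = sumL A + sumL B"
  by (simp_all add: sumL_def)

lemma cnt_simps[simp]: "cnt [] l = 0"
  "cnt (p # L) l = (if snd p = l then (if fst p then 1 else -1) else 0) + cnt L l"
  "cnt (A @ B) l = cnt A l + cnt B l"
  by (simp_all add: cnt_def)

lemma CS_repr: "a \<in> CS \<Longrightarrow> \<exists>L. (\<forall>p \<in> set L. canon (snd p)) \<and> a = sumL L"
proof (induction rule: CS.induct)
  case (cgen l)
  then show ?case by (intro exI[of _ "[(True, l)]"]) (simp add: sgr_def)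
next
  case czero then show ?case by (intro exI[of _ "[]"]) simp
next
  case (cadd a b)
  then obtain A B where "\<forall>p \<in> set A. canon (snd p)" "a = sumL A"
    "\<forall>p \<in> set B. canon (snd p)" "b = sumL B" by blast
  then show ?case by (intro exI[of _ "A @ B"]) auto
next
  case (cneg a)
  then obtain A where A: "\<forall>p \<in> set A. canon (snd p)" "a = sumL A" by blast
  have "sumL (map (\<lambda>p. (\<not> fst p, snd p)) A) = - sumL A"
    by (induction A) (auto simp: sgr_def)
  then show ?case using A by (intro exI[of _ "map (\<lambda>p. (\<not> fst p, snd p)) A"]) auto
qed

lemma RR_rn: "RR (rnl (map g l)) = rho (rnorm l)"
  by (metis abs_rnorm RR_abs)

lemma RR_sumL:
  assumes "canon l'"
  shows "(\<forall>p \<in> set L. canon (snd p)) \<Longrightarrow> RR (sumL L) dlt l' = cnt L l'"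
proof (induction L)
  case Nil then show ?case by (simp add: RR_zero)
next
  case (Cons p L)
  have k: "rho (rnorm (snd p)) dlt l' = (if snd p = l' then 1 else 0)"
    using K1[of "snd p" l'] Cons.prems assms by simp
  have "RR (sgr p) dlt l' = (if snd p = l' then (if fst p then 1 else -1) else 0)"
    unfolding sgr_def by (cases "fst p") (simp_all add: RR_neg RR_rn k)
  then show ?case using Cons by (simp add: RR_add)
qed

lemma cnt_sign:
  "(\<forall>p \<in> set L. snd p = l \<longrightarrow> fst p = s) \<Longrightarrow> (if s then cnt L l \<ge> 0 else cnt L l \<le> 0)"
  by (induction L) (auto split: if_splits)

lemma cancel: "(\<forall>l. cnt L l = 0) \<Longrightarrow> sumL L = 0"
proof (induction "length L" arbitrary: L rule: less_induct)
  case less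
  show ?case
  proof (cases L)
    case Nil then show ?thesis by simp
  next
    case (Cons p L')
    obtain s l where p: "p = (s, l)" by (cases p)
    have "\<exists>q \<in> set L'. snd q = l \<and> fst q = (\<not> s)"
    proof (rule ccontr)
      assume "\<not> ?thesis"
      then have "\<forall>q \<in> set L'. snd q = l \<longrightarrow> fst q = s" by auto
      from cnt_sign[OF this] have "if s then cnt L' l \<ge> 0 else cnt L' l \<le> 0" .
      moreover have "cnt L l = 0" using less.prems by blast
      ultimately show False using Cons p by (auto split: if_splits)
    qed
    then obtain q where q0: "q \<in> set L'" "snd q = l" "fst q = (\<not> s)" by blast
    then have q: "q \<in> set L'" "q = (\<not> s, l)" by (simp_all add: prod_eq_iff)
    then obtain A B where AB: "L' = A @ q # B" by (metis split_list)
    have sq: "sgr p + sgr q = 0" using p q by (simp add: sgr_def)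
    have cq: "cnt [p] l'' + cnt [q] l'' = 0" for l'' using p q by simp
    have "\<forall>l''. cnt (A @ B) l'' = 0"
    proof
      fix l''
      have "cnt L l'' = 0" using less.prems by blast
      then show "cnt (A @ B) l'' = 0" using Cons AB cq[of l''] by simp
    qed
    moreover have "length (A @ B) < length L" using Cons AB by simp
    ultimately have "sumL (A @ B) = 0" using less.hyps by blast
    moreover have "sumL L = (sgr p + sgr q) + sumL (A @ B)"
      using Cons AB by (simp add: algebra_simps)
    ultimately show ?thesis using sq by simp
  qed
qed

lemma cnt_noncanon: "(\<forall>p \<in> set L. canon (snd p)) \<Longrightarrow> \<not> canon l \<Longrightarrow> cnt L l = 0"
  by (induction L) auto

lemma Inj:
  assumes "\<forall>w. RR x dlt w = 0"
  shows "x = 0"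
proof -
  obtain L where L: "\<forall>p \<in> set L. canon (snd p)" "x = sumL L"
    using CS_repr[OF all_CS] by blast
  have "\<forall>l. cnt L l = 0"
  proof
    fix l
    show "cnt L l = 0"
    proof (cases "canon l")
      case True
      then show ?thesis using RR_sumL[OF True L(1)] L(2) assms by simp
    next
      case False
      then show ?thesis using cnt_noncanon L(1) by blast
    qed
  qed
  then show ?thesis using cancel L(2) by simp
qed


lemma W_zero:
  assumes "a \<notin> lets we"
  shows "rho we q (a # w') = 0"
proof (rule ccontr)
  assume "rho we q (a # w') \<noteq> 0"
  then obtain u v where "a # w' = u @ v" "u \<noteq> []" "set u \<subseteq> lets we"
    using rho_supp by blast
  then show False using assms by (cases u) auto
qed

lemma extract_w:
  assumes yy: "y \<noteq> y'" and ly: "y \<notin> lets we" and ly': "y' \<notin> lets we"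
    and E: "br (abs_RL we) (br (g y) (g y')) + br (g y) (br (abs_RL we) (g y')) = 0"
  shows "abs_RL we = 0"
proof (rule Inj, intro allI)
  fix w
  have Wy: "\<And>q w'. rho we q (y # w') = 0" using W_zero[OF ly] .
  have Wy': "\<And>q w'. rho we q (y' # w') = 0" using W_zero[OF ly'] .
  show "RR (abs_RL we) dlt w = 0"
  proof (cases "rho we dlt w = 0")
    case True then show ?thesis by (simp add: RR_abs)
  next
    case False
    from rho_dlt_supp[OF False] have dw: "distinct w" "set w \<subseteq> lets we" by auto
    then have d: "distinct (y # y' # w)" using ly ly' yy by auto
    have "RR (br (abs_RL we) (br (g y) (g y')) + br (g y) (br (abs_RL we) (g y'))) dlt (y # y' # w)
          = - 2 * rho we dlt w"
      using d yy by (simp add: RR_add RR_br RR_gen RR_abs Wy Wy')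
    then have "rho we dlt w = 0" using E by (simp add: RR_zero)
    then show ?thesis by (simp add: RR_abs)
  qed
qed

lemma part1:
  assumes d: "rl_derivation d"
  shows "d (g y) \<in> J y"
proof -
  define x where "x = d (g y)"
  define e0 where "e0 = rep_RL x"
  define v where "v = abs_RL (Sub y e0)"
  define u where "u = x - v"
  have ax: "abs_RL e0 = x" by (simp add: e0_def abs_rep)
  have u: "u \<in> rl_ideal (g y)" using Sub_diff[of e0 y] by (simp add: u_def v_def ax)
  have v: "v \<in> rl_ideal (g y')" if yy: "y' \<noteq> y" for y'
  proof -
    define we where "we = Sub y' (Sub y e0)"
    define w where "w = abs_RL we"
    define m where "m = v - w"
    have m: "m \<in> rl_ideal (g y')" using Sub_diff[of "Sub y e0" y'] by (simp add: m_def v_def w_def we_def)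
    have ly: "y \<notin> lets we" and ly': "y' \<notin> lets we"
      using lets_Sub[of y' "Sub y e0"] lets_Sub[of y e0] by (auto simp: we_def)
    define X where "X = br (g y) (g y')"
    have gy: "g y \<in> rl_ideal (g y)" by (rule rl_ideal.gen)
    have gy': "g y' \<in> rl_ideal (g y')" by (rule rl_ideal.gen)
    have XI: "X \<in> rl_ideal (g y)" unfolding X_def by (rule rl_ideal.br_r[OF gy])
    have XI': "X \<in> rl_ideal (g y')" unfolding X_def by (rule rl_ideal.br_l[OF gy'])
    have rel0: "br (g y) X = 0"
      using rnl_rel[of "[y, y, y']"] by (simp add: X_def)
    have dl: "\<And>a b. d (br a b) = br (d a) b + br a (d b)" using d by (simp add: rl_derivation_def)
    have "0 = d (br (g y) X)" using rel0 deriv_zero[OF d] by simp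
    also have "\<dots> = br x X + br (g y) (br x (g y') + br (g y) (d (g y')))"
      by (simp add: dl X_def x_def)
    finally have eq0: "br x X + br (g y) (br x (g y') + br (g y) (d (g y'))) = 0" by simp
    have xdec: "x = u + m + w" by (simp add: u_def m_def)
    have z1: "br u X = 0" by (rule ideal_abel[OF u XI])
    have z2: "br m X = 0" by (rule ideal_abel[OF m XI'])
    have z3: "br u (g y') \<in> rl_ideal (g y)" by (rule rl_ideal.br_r[OF u])
    have z4: "br (g y) (br u (g y')) = 0" by (rule ideal_abel[OF gy z3])
    have z5: "br m (g y') = 0" by (rule ideal_abel[OF m gy'])
    have z6: "br (g y) (d (g y')) \<in> rl_ideal (g y)" by (rule rl_ideal.br_r[OF gy])
    have z7: "br (g y) (br (g y) (d (g y'))) = 0" by (rule ideal_abel[OF gy z6])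
    have "br x X + br (g y) (br x (g y') + br (g y) (d (g y'))) =
          br w X + br (g y) (br w (g y'))"
      unfolding xdec by (simp add: br_add_l br_add_r z1 z2 z4 z5 z7)
    then have E: "br w X + br (g y) (br w (g y')) = 0" using eq0 by simp
    have "w = 0" unfolding w_def
      by (rule extract_w[OF yy[symmetric] ly ly']) (use E in \<open>simp add: w_def X_def\<close>)
    then show ?thesis using m by (simp add: m_def)
  qed
  have "x = u + v" by (simp add: u_def)
  then show ?thesis unfolding J_def x_def[symmetric] using u v by blast
qed

theorem proposition3p2:
  shows "(\<forall>d :: 'y RL \<Rightarrow> 'y RL. rl_derivation d \<longrightarrow> (\<forall>y. d (rl_gen y) \<in> J y))
       \<and> (\<forall>f :: 'y \<Rightarrow> 'y RL. (\<forall>y. f y \<in> rl_geq2 \<and> f y \<in> J y) \<longrightarrow>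
              (\<exists>!d. rl_derivation d \<and> (\<forall>y. d (rl_gen y) = f y)))"
proof (intro conjI allI impI)
  fix d :: "'y RL \<Rightarrow> 'y RL" and y
  assume "rl_derivation d"
  then show "d (rl_gen y) \<in> J y" by (rule part1)
next
  fix f :: "'y \<Rightarrow> 'y RL"
  assume hf: "\<forall>y. f y \<in> rl_geq2 \<and> f y \<in> J y"
  show "\<exists>!d. rl_derivation d \<and> (\<forall>y. d (rl_gen y) = f y)"
  proof (rule ex1I)
    show "rl_derivation (\<lambda>x. Dx f (rep_RL x)) \<and> (\<forall>y. Dx f (rep_RL (rl_gen y)) = f y)"
      by (rule deriv_exists[OF hf])
  next
    fix d assume "rl_derivation d \<and> (\<forall>y. d (rl_gen y) = f y)"
    then show "d = (\<lambda>x. Dx f (rep_RL x))"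
      using deriv_exists[OF hf] deriv_unique by metis
  qed
qed

end
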